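(* Let $G=(V,E)$ be a bridgeless connected graph with no $2$-edge-cut, and assume all roots of $F(G,\lambda)$ are real. Let $\gamma$ be the number of $3$-edge-cuts of $G$ and $r=|E|-|V|+1$. Then $$\gamma\ge \frac{(|E|-r)(|E|-1)}{2(r-1)},$$ and the inequality is strict if $r-1$ does not divide $|E|-1$.
   Context: Graphs are finite, undirected, possibly with loops and parallel edges. The flow polynomial $F(G,\lambda)$ is determined by: $F(G,\lambda)=1$ if $E(G)=\emptyset$; $F(G,\lambda)=0$ if $G$ has a bridge; multiplicative over disjoint unions; $F(G,\lambda)=(\lambda-1)F(G-e,\lambda)$ if $e$ is a loop; otherwise $F(G,\lambda)=F(G/e,\lambda)-F(G-e,\lambda)$ ($G/e$ = contraction of $e$). A $k$-edge-cut is a set of $k$ edges whose deletion increases the number of components. *)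

theory Defs
  imports Complex_Main "HOL-Computational_Algebra.Polynomial"
begin

text \<open>A finite multigraph (loops and parallel edges allowed) is given by a vertex set V,
an edge set E and an incidence map ends assigning to each edge its set of endpoints
(one endpoint for a loop, two for a non-loop edge).\<close>

definition graph :: "'v set \<Rightarrow> 'e set \<Rightarrow> ('e \<Rightarrow> 'v set) \<Rightarrow> bool" where
  "graph V E ends \<longleftrightarrow> finite V \<and> finite E \<and>
     (\<forall>e\<in>E. ends e \<subseteq> V \<and> card (ends e) \<in> {1, 2})"

definition is_loop :: "('e \<Rightarrow> 'v set) \<Rightarrow> 'e \<Rightarrow> bool" where
  "is_loop ends e \<longleftrightarrow> card (ends e) = 1"

definition adj :: "'e set \<Rightarrow> ('e \<Rightarrow> 'v set) \<Rightarrow> ('v \<times> 'v) set" where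
  "adj E ends = {(x, y). \<exists>e\<in>E. x \<in> ends e \<and> y \<in> ends e}"

definition comp_rel :: "'v set \<Rightarrow> 'e set \<Rightarrow> ('e \<Rightarrow> 'v set) \<Rightarrow> ('v \<times> 'v) set" where
  "comp_rel V E ends = {(u, v). u \<in> V \<and> v \<in> V \<and> (u, v) \<in> (adj E ends)\<^sup>*}"

definition ncomp :: "'v set \<Rightarrow> 'e set \<Rightarrow> ('e \<Rightarrow> 'v set) \<Rightarrow> nat" where
  "ncomp V E ends = card (V // comp_rel V E ends)"

definition connected_graph :: "'v set \<Rightarrow> 'e set \<Rightarrow> ('e \<Rightarrow> 'v set) \<Rightarrow> bool" where
  "connected_graph V E ends \<longleftrightarrow> V \<noteq> {} \<and> (\<forall>u\<in>V. \<forall>v\<in>V. (u, v) \<in> (adj E ends)\<^sup>*)"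

definition is_edge_cut :: "'v set \<Rightarrow> 'e set \<Rightarrow> ('e \<Rightarrow> 'v set) \<Rightarrow> 'e set \<Rightarrow> bool" where
  "is_edge_cut V E ends S \<longleftrightarrow> S \<subseteq> E \<and> ncomp V (E - S) ends > ncomp V E ends"

definition k_edge_cuts :: "nat \<Rightarrow> 'v set \<Rightarrow> 'e set \<Rightarrow> ('e \<Rightarrow> 'v set) \<Rightarrow> 'e set set" where
  "k_edge_cuts k V E ends = {S. card S = k \<and> is_edge_cut V E ends S}"

definition is_bridge :: "'v set \<Rightarrow> 'e set \<Rightarrow> ('e \<Rightarrow> 'v set) \<Rightarrow> 'e \<Rightarrow> bool" where
  "is_bridge V E ends e \<longleftrightarrow> e \<in> E \<and> is_edge_cut V E ends {e}"

definition contract_ends :: "('e \<Rightarrow> 'v set) \<Rightarrow> 'v \<Rightarrow> 'v \<Rightarrow> ('e \<Rightarrow> 'v set)" where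
  "contract_ends ends u v = (\<lambda>f. (\<lambda>x. if x = v then u else x) ` ends f)"

text \<open>The flow polynomial, given by its defining recursion: flow_poly V E ends p means that
p is the flow polynomial F(G, \<lambda>) of G = (V, E, ends).  (The rules determine p uniquely.)\<close>
inductive flow_poly :: "'v set \<Rightarrow> 'e set \<Rightarrow> ('e \<Rightarrow> 'v set) \<Rightarrow> real poly \<Rightarrow> bool" where
  empty: "graph V {} ends \<Longrightarrow> flow_poly V {} ends 1"
| bridge: "graph V E ends \<Longrightarrow> is_bridge V E ends e \<Longrightarrow> flow_poly V E ends 0"
| disj_union: "graph V E ends \<Longrightarrow> graph V1 E1 ends \<Longrightarrow> graph V2 E2 ends \<Longrightarrow>
     V1 \<inter> V2 = {} \<Longrightarrow> E1 \<inter> E2 = {} \<Longrightarrow> V = V1 \<union> V2 \<Longrightarrow> E = E1 \<union> E2 \<Longrightarrow>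
     flow_poly V1 E1 ends p1 \<Longrightarrow> flow_poly V2 E2 ends p2 \<Longrightarrow> flow_poly V E ends (p1 * p2)"
| loop: "graph V E ends \<Longrightarrow> e \<in> E \<Longrightarrow> is_loop ends e \<Longrightarrow>
     flow_poly V (E - {e}) ends p \<Longrightarrow> flow_poly V E ends ([:-1, 1:] * p)"
| del_contr: "graph V E ends \<Longrightarrow> e \<in> E \<Longrightarrow> ends e = {u, v} \<Longrightarrow> u \<noteq> v \<Longrightarrow>
     \<not> is_bridge V E ends e \<Longrightarrow>
     flow_poly (V - {v}) (E - {e}) (contract_ends ends u v) p1 \<Longrightarrow>
     flow_poly V (E - {e}) ends p2 \<Longrightarrow> flow_poly V E ends (p1 - p2)"

end

theory Submission
  imports Defs "HOL-Computational_Algebra.Fundamental_Theorem_Algebra"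
begin


lemma coeff_lin_mult_Suc: fixes q :: "'a::comm_ring_1 poly" shows "coeff ([:-a,1:] * q) (Suc k) = coeff q k - a * coeff q (Suc k)"
  by simp

lemma lin_prod_coeffs:
  fixes xs :: "'a::comm_ring_1 list"
  shows "degree (\<Prod>x\<leftarrow>xs. [:-x,1:]) = length xs \<and> coeff (\<Prod>x\<leftarrow>xs. [:-x,1:]) (length xs) = 1
     \<and> (length xs \<ge> 1 \<longrightarrow> coeff (\<Prod>x\<leftarrow>xs. [:-x,1:]) (length xs - 1) = - sum_list xs)
     \<and> (length xs \<ge> 2 \<longrightarrow> 2 * coeff (\<Prod>x\<leftarrow>xs. [:-x,1:]) (length xs - 2) =
            (sum_list xs)^2 - sum_list (map (\<lambda>x. x^2) xs))"
proof (induction xs)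
  case Nil
  then show ?case by simp
next
  case (Cons a xs)
  define q where "q = (\<Prod>x\<leftarrow>xs. [:-x,1:])"
  define n where "n = length xs"
  have P: "(\<Prod>x\<leftarrow>a#xs. [:-x,1:]) = [:-a,1:] * q" by (simp add: q_def)
  have dq: "degree q = n" "coeff q n = 1" using Cons.IH by (auto simp: q_def n_def)
  have z: "coeff q (Suc n) = 0" using dq by (simp add: coeff_eq_0)
  have c1: "coeff ([:-a,1:] * q) (Suc n) = 1" using dq z by (simp only: coeff_lin_mult_Suc) simp
  have d: "degree ([:-a,1:] * q) = Suc n"
  proof (rule order.antisym)
    show "degree ([:-a,1:] * q) \<le> Suc n"
      using degree_mult_le[of "[:-a,1:]" q] dq by simp
    show "Suc n \<le> degree ([:-a,1:] * q)" using c1 by (intro le_degree) simp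
  qed
  have c2: "coeff ([:-a,1:] * q) n = - (a + sum_list xs)"
  proof (cases n)
    case 0
    then have "xs = []" by (simp add: n_def)
    then show ?thesis using \<open>n = 0\<close> by (simp add: q_def)
  next
    case (Suc k)
    have "coeff ([:-a,1:] * q) n = coeff q k - a * coeff q n" using Suc by (simp only: coeff_lin_mult_Suc)
    also have "coeff q k = - sum_list xs" using Cons.IH Suc by (simp add: q_def n_def)
    finally show ?thesis using dq by simp
  qed
  have c3: "n \<ge> 1 \<Longrightarrow> 2 * coeff ([:-a,1:] * q) (n - 1) =
      (a + sum_list xs)^2 - (a^2 + sum_list (map (\<lambda>x. x^2) xs))"
  proof -
    assume n1: "n \<ge> 1"
    have e1: "coeff q (n-1) = - sum_list xs" using Cons.IH n1 by (simp add: q_def n_def)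
    show ?thesis
    proof (cases "n = 1")
      case True
      then obtain b where "xs = [b]" unfolding n_def by (cases xs) auto
      then show ?thesis using True by (simp add: q_def power2_eq_square algebra_simps)
    next
      case False
      then obtain k where k: "n - 1 = Suc k" "n - 2 = k" using n1 by (cases "n - 1") auto
      have "coeff ([:-a,1:] * q) (n-1) = coeff q k - a * coeff q (n - 1)" using k by (simp only: coeff_lin_mult_Suc)
      moreover have "2 * coeff q k = (sum_list xs)^2 - sum_list (map (\<lambda>x. x^2) xs)"
        using Cons.IH False n1 k by (simp add: q_def n_def)
      ultimately show ?thesis using e1 by (simp add: power2_eq_square algebra_simps)
    qed
  qed
  show ?case unfolding P using d c1 c2 c3 by (simp add: n_def)
qed

lemma sq_dev_sum: fixes xs :: "real list"
  shows "sum_list (map (\<lambda>x. (x - c)^2) xs) = sum_list (map (\<lambda>x. x^2) xs) - 2*c*sum_list xs + real (length xs) * c^2"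
  by (induction xs) (auto simp: power2_eq_square algebra_simps)

lemma cs_list: fixes xs :: "real list" assumes "xs \<noteq> []"
  shows "(sum_list xs)^2 \<le> real (length xs) * sum_list (map (\<lambda>x. x^2) xs)"
    and "(sum_list xs)^2 = real (length xs) * sum_list (map (\<lambda>x. x^2) xs) \<Longrightarrow> \<forall>x\<in>set xs. x = sum_list xs / real (length xs)"
proof -
  define n where "n = real (length xs)"
  define c where "c = sum_list xs / n"
  have n0: "n > 0" using assms by (simp add: n_def)
  have e: "n * sum_list (map (\<lambda>x. (x - c)^2) xs) = n * sum_list (map (\<lambda>x. x^2) xs) - (sum_list xs)^2"
    unfolding sq_dev_sum using n0 by (simp add: c_def n_def[symmetric] power2_eq_square field_simps)
  have nn: "sum_list (map (\<lambda>x. (x - c)^2) xs) \<ge> 0" by (rule sum_list_nonneg) auto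
  show "(sum_list xs)^2 \<le> real (length xs) * sum_list (map (\<lambda>x. x^2) xs)"
    using e nn n0 unfolding n_def[symmetric] by (smt (verit) mult_nonneg_nonneg)
  assume eq: "(sum_list xs)^2 = real (length xs) * sum_list (map (\<lambda>x. x^2) xs)"
  then have "sum_list (map (\<lambda>x. (x - c)^2) xs) = 0" using e n0 unfolding n_def[symmetric] by simp
  then have "\<forall>y\<in>set (map (\<lambda>x. (x - c)^2) xs). y = 0"
    by (subst sum_list_nonneg_eq_0_iff[symmetric]) auto
  then show "\<forall>x\<in>set xs. x = sum_list xs / real (length xs)" by (auto simp: c_def n_def)
qed

lemma two_choose2: "2 * real (m choose 2) = real m * (real m - 1)"
proof (induction m)
  case 0 then show ?case by simp
next
  case (Suc m)
  have "Suc m choose 2 = m + (m choose 2)" by (simp add: numeral_2_eq_2)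
  then show ?case using Suc by (simp add: algebra_simps)
qed

lemma rat_pow_int:
  fixes a b :: int assumes b: "b > 0" and k: "k \<ge> 1" and z: "(real_of_int a / real_of_int b)^k \<in> \<int>"
  shows "b dvd a"
proof -
  from z obtain w where w: "(real_of_int a / real_of_int b)^k = real_of_int w" by (auto elim: Ints_cases)
  then have "real_of_int (a^k) = real_of_int (w * b^k)" using b
    by (simp add: power_divide field_simps)
  then have "a^k = w * b^k" by (simp only: of_int_eq_iff)
  then have "b^k dvd a^k" by simp
  then show ?thesis using k by simp
qed

lemma poly_map_of_real: "poly (map_poly complex_of_real p) (complex_of_real x) = complex_of_real (poly p x)"
  by (induction p) (auto simp: map_poly_pCons)

lemma poly_prod_lin: fixes y :: "'a::comm_ring_1" shows "poly (\<Prod>x\<leftarrow>zs. [:-x,1:]) y = (\<Prod>x\<leftarrow>zs. y - x)"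
  by (induction zs) (auto simp: algebra_simps)

lemma prod_list_of_real_neg: "(\<Prod>x\<leftarrow>xs. - complex_of_real x) = complex_of_real (\<Prod>x\<leftarrow>xs. - x)"
  by (induction xs) auto

lemma prod_list_const: "\<forall>y\<in>set ys. y = c \<Longrightarrow> (\<Prod>x\<leftarrow>ys. f x) = (f c :: 'b::comm_monoid_mult) ^ length ys"
  by (induction ys) auto

lemma prod_list_map_remove1: "x \<in> set xs \<Longrightarrow> (\<Prod>y\<leftarrow>xs. f y) = (f x :: 'b::comm_monoid_mult) * (\<Prod>y\<leftarrow>remove1 x xs. f y)"
  by (induction xs) (auto simp: ac_simps)

lemma newton_main:
  fixes p :: "real poly" and m g r :: nat
  assumes deg: "degree p = r" and lc: "coeff p r = 1" and r2: "r \<ge> 2"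
    and c1: "coeff p (r-1) = - real m" and c2: "coeff p (r-2) = real (m choose 2) - real g"
    and p1: "poly p 1 = 0" and p0: "poly p 0 \<in> \<int>"
    and rr: "\<forall>z::complex. poly (map_poly complex_of_real p) z = 0 \<longrightarrow> z \<in> \<real>"
  shows "(real m - 1) * (real m - real r) \<le> 2 * real g * (real r - 1)
     \<and> ((real m - 1) * (real m - real r) = 2 * real g * (real r - 1) \<longrightarrow> (int r - 1) dvd (int m - 1))"
proof -
  define P where "P = map_poly complex_of_real p"
  have cP: "coeff P k = complex_of_real (coeff p k)" for k by (simp add: P_def coeff_map_poly)
  have dP: "degree P = r" unfolding P_def using deg by (subst degree_map_poly) auto
  have lP: "lead_coeff P = 1" using dP cP lc by simp
  have P0: "P \<noteq> 0" using lP by auto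
  obtain zs where zs: "mset zs = proots P" using ex_mset by blast
  have "P = smult (lead_coeff P) (\<Prod>x\<in>#proots P. [:-x, 1:])"
    by (rule complex_poly_decompose_multiset [symmetric])
  also have "(\<Prod>x\<in>#proots P. [:-x, 1:]) = (\<Prod>x\<leftarrow>zs. [:-x, 1:])"
    by (subst prod_mset_prod_list [symmetric]) (simp add: zs)
  finally have Pz: "P = (\<Prod>x\<leftarrow>zs. [:-x, 1:])" using lP by simp
  have zreal: "z \<in> \<real>" if "z \<in> set zs" for z
  proof -
    have "z \<in># proots P" using that zs by (metis set_mset_mset)
    then have "poly P z = 0" using P0 by simp
    then show ?thesis using rr by (simp add: P_def)
  qed
  define xs where "xs = map Re zs"
  have zx: "zs = map complex_of_real xs" unfolding xs_def using zreal by (induction zs) auto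
  note L = lin_prod_coeffs[of zs]
  have lz: "length zs = r" using L dP Pz by simp
  have lx: "length xs = r" using lz by (simp add: xs_def)
  have s1: "sum_list xs = real m"
  proof -
    have "complex_of_real (coeff p (r-1)) = - sum_list zs" using L lz r2 Pz cP by (metis le_trans one_le_numeral)
    then have "complex_of_real (- real m) = complex_of_real (- sum_list xs)"
      using c1 by (simp add: zx sum_list_of_real)
    then show ?thesis by (simp only: of_real_eq_iff)
  qed
  have sq: "sum_list (map (\<lambda>x. x^2) zs) = complex_of_real (sum_list (map (\<lambda>x. x^2) xs))"
    unfolding zx by (induction xs) auto
  have s2: "sum_list (map (\<lambda>x. x^2) xs) = real m + 2 * real g"
  proof -
    have "2 * complex_of_real (coeff p (r-2)) = (sum_list zs)^2 - sum_list (map (\<lambda>x. x^2) zs)"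
      using L lz r2 Pz cP by metis
    then have "complex_of_real (2 * coeff p (r-2)) = complex_of_real ((sum_list xs)^2 - sum_list (map (\<lambda>x. x^2) xs))"
      unfolding sq by (simp add: zx sum_list_of_real)
    then have "2 * coeff p (r-2) = (sum_list xs)^2 - sum_list (map (\<lambda>x. x^2) xs)" by (simp only: of_real_eq_iff)
    then show ?thesis using c2 s1 two_choose2[of m] by (simp add: power2_eq_square algebra_simps)
  qed
  have one: "1 \<in> set xs"
  proof -
    have "poly P 1 = 0" using p1 poly_map_of_real[of p 1] by (simp add: P_def)
    then have "(\<Prod>x\<leftarrow>zs. 1 - x) = 0" using Pz by (simp add: poly_prod_lin)
    then have "0 \<in> set (map (\<lambda>x. 1 - x) zs)" by (simp add: prod_list_zero_iff)
    then have "1 \<in> set zs" by auto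
    then show ?thesis unfolding xs_def by force
  qed
  define ys where "ys = remove1 1 xs"
  have ly: "length ys = r - 1" using one lx by (simp add: ys_def length_remove1)
  have sy: "sum_list ys = real m - 1"
    using sum_list_map_remove1[OF one, of "\<lambda>x. x"] s1 by (simp add: ys_def)
  have sqy: "sum_list (map (\<lambda>x. x^2) ys) = real m + 2 * real g - 1"
    using sum_list_map_remove1[OF one, of "\<lambda>x. x^2"] s2 by (simp add: ys_def)
  have yne: "ys \<noteq> []" using ly r2 by auto
  have lyr: "real (length ys) = real r - 1" using ly r2 by simp
  have ineq: "(real m - 1) * (real m - real r) \<le> 2 * real g * (real r - 1)"
  proof -
    have "(real m - 1)^2 \<le> (real r - 1) * (real m + 2 * real g - 1)" using cs_list(1)[OF yne] sy sqy lyr by simp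
    moreover have "(real m - 1) * (real m - real r) - 2 * real g * (real r - 1) = (real m - 1)^2 - (real r - 1) * (real m + 2 * real g - 1)"
      by (simp add: power2_eq_square algebra_simps)
    ultimately show ?thesis by linarith
  qed
  moreover have "(int r - 1) dvd (int m - 1)" if eq: "(real m - 1) * (real m - real r) = 2 * real g * (real r - 1)"
  proof -
    define c where "c = (real m - 1) / (real r - 1)"
    have "(real m - 1)^2 = (real r - 1) * (real m + 2 * real g - 1)"
      using eq by (simp add: power2_eq_square algebra_simps)
    then have "(sum_list ys)^2 = real (length ys) * sum_list (map (\<lambda>x. x^2) ys)" using sy sqy lyr by simp
    then have allc: "\<forall>y\<in>set ys. y = c" using cs_list(2)[OF yne] sy lyr by (simp add: c_def)
    have "poly P 0 = (\<Prod>x\<leftarrow>zs. 0 - x)" using Pz by (simp add: poly_prod_lin)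
    also have "\<dots> = complex_of_real (\<Prod>x\<leftarrow>xs. - x)" by (simp add: zx o_def prod_list_of_real_neg)
    finally have "complex_of_real (poly p 0) = complex_of_real (\<Prod>x\<leftarrow>xs. - x)"
      using poly_map_of_real[of p 0] by (simp add: P_def)
    then have "poly p 0 = (\<Prod>x\<leftarrow>xs. - x)" by (simp only: of_real_eq_iff)
    also have "\<dots> = - (\<Prod>x\<leftarrow>ys. - x)" using prod_list_map_remove1[OF one, of "\<lambda>x. - x"] by (simp add: ys_def)
    also have "(\<Prod>x\<leftarrow>ys. - x) = (- c) ^ (r - 1)" using prod_list_const[OF allc, of "\<lambda>x. - x"] ly by simp
    finally have pp: "poly p 0 = - ((- c) ^ (r - 1))" .
    have mc: "(- c) ^ (r - 1) \<in> \<int>" using p0 unfolding pp by (metis Ints_minus minus_minus)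
    have "c ^ (r - 1) = (-1)^(r-1) * (- c) ^ (r - 1)" using power_minus[of "- c" "r - 1"] by simp
    then have "c ^ (r - 1) \<in> \<int>" using mc by (metis Ints_1 Ints_minus Ints_mult Ints_power)
    then have "(real_of_int (int m - 1) / real_of_int (int r - 1)) ^ (r - 1) \<in> \<int>" by (simp add: c_def)
    then show ?thesis by (rule rat_pow_int[rotated 2]) (use r2 in auto)
  qed
  ultimately show ?thesis by blast
qed




lemma adj_sym: "(x, y) \<in> adj A ends \<Longrightarrow> (y, x) \<in> adj A ends"
  unfolding adj_def by auto

lemma adj_rtrancl_sym: "(x, y) \<in> (adj A ends)\<^sup>* \<Longrightarrow> (y, x) \<in> (adj A ends)\<^sup>*"
proof (induction rule: rtrancl_induct)
  case base then show ?case by simp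
next
  case (step y z)
  then show ?case using adj_sym by (meson converse_rtrancl_into_rtrancl)
qed

lemma comp_equiv: "equiv V (comp_rel V A ends)"
  unfolding equiv_def refl_on_def sym_def trans_def comp_rel_def
  using adj_rtrancl_sym by (auto intro: rtrancl_trans)

lemma quotient_img: "V // R = (\<lambda>a. R``{a}) ` V"
  unfolding quotient_def by auto

lemma comp_class: "comp_rel V A ends `` {a} = (if a \<in> V then {b\<in>V. (a, b) \<in> (adj A ends)\<^sup>*} else {})"
  unfolding comp_rel_def by auto

lemma finite_ncomp_quot: "finite V \<Longrightarrow> finite (V // comp_rel V A ends)"
  by (simp add: quotient_img)

lemma ncomp_empty: assumes "finite V" shows "ncomp V {} ends = card V"
proof -
  have a: "adj {} ends = {}" unfolding adj_def by auto
  have "V // comp_rel V {} ends = (\<lambda>a. {a}) ` V"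
    unfolding quotient_img comp_class a by auto
  then show ?thesis unfolding ncomp_def by (simp add: card_image)
qed

lemma adj_insert: "adj (insert e A) ends = adj A ends \<union> (ends e \<times> ends e)"
  unfolding adj_def by auto

lemma adj_mono: "A \<subseteq> B \<Longrightarrow> adj A ends \<subseteq> adj B ends"
  unfolding adj_def by auto

lemma add_connected:
  assumes "\<forall>a\<in>ends e. \<forall>b\<in>ends e. (a, b) \<in> (adj A ends)\<^sup>*"
  shows "comp_rel V (insert e A) ends = comp_rel V A ends"
proof -
  have "(adj A ends \<union> (ends e \<times> ends e))\<^sup>* = (adj A ends)\<^sup>*"
    by (rule rtrancl_subset) (use assms in auto)
  then show ?thesis unfolding comp_rel_def adj_insert by simp
qed

lemma add_disconn_rel:
  assumes "ends e = {x, y}"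
  shows "(a, b) \<in> (adj (insert e A) ends)\<^sup>* \<longleftrightarrow> (a, b) \<in> (adj A ends)\<^sup>* \<or>
     (((a, x) \<in> (adj A ends)\<^sup>* \<or> (a, y) \<in> (adj A ends)\<^sup>*) \<and> ((x, b) \<in> (adj A ends)\<^sup>* \<or> (y, b) \<in> (adj A ends)\<^sup>*))"
    (is "?L \<longleftrightarrow> ?R")
proof
  let ?S = "(adj A ends)\<^sup>*"
  assume ?L
  then show ?R
  proof (induction rule: rtrancl_induct)
    case base then show ?case by simp
  next
    case (step b c)
    from step.hyps(2) have "(b, c) \<in> adj A ends \<or> (b \<in> {x,y} \<and> c \<in> {x,y})"
      unfolding adj_insert assms by blast
    then show ?case
    proof
      assume bc: "(b, c) \<in> adj A ends"
      have bc1: "(b, c) \<in> ?S" using bc by (rule r_into_rtrancl)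
      have bc2: "(c, b) \<in> ?S" using bc adj_sym by (metis r_into_rtrancl)
      from step.IH show ?case
      proof
        assume "(a, b) \<in> ?S" then have "(a, c) \<in> ?S" using bc1 by (rule rtrancl_trans)
        then show ?case by blast
      next
        assume h: "((a, x) \<in> ?S \<or> (a, y) \<in> ?S) \<and> ((x, b) \<in> ?S \<or> (y, b) \<in> ?S)"
        have "(x, c) \<in> ?S \<or> (y, c) \<in> ?S" using h bc1 by (meson rtrancl_trans)
        then show ?case using h by blast
      qed
    next
      assume bc: "b \<in> {x,y} \<and> c \<in> {x,y}"
      have cc: "(x, c) \<in> ?S \<or> (y, c) \<in> ?S" using bc by blast
      from step.IH have "(a, x) \<in> ?S \<or> (a, y) \<in> ?S"
      proof
        assume "(a, b) \<in> ?S" then show ?thesis using bc by blast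
      next
        assume h: "((a, x) \<in> ?S \<or> (a, y) \<in> ?S) \<and> ((x, b) \<in> ?S \<or> (y, b) \<in> ?S)"
        then show ?thesis by blast
      qed
      then show ?case using cc by blast
    qed
  qed
next
  let ?S = "(adj A ends)\<^sup>*"
  let ?T = "(adj (insert e A) ends)\<^sup>*"
  have sub: "?S \<subseteq> ?T" by (rule rtrancl_mono) (rule adj_mono, blast)
  have xy: "(x, y) \<in> ?T" "(y, x) \<in> ?T"
    unfolding adj_insert assms by blast+
  assume R: ?R
  show ?L
  proof (cases "(a, b) \<in> ?S")
    case True then show ?thesis using sub by blast
  next
    case False
    then have h: "((a, x) \<in> ?T \<or> (a, y) \<in> ?T) \<and> ((x, b) \<in> ?T \<or> (y, b) \<in> ?T)" using R sub by blast
    then show ?thesis using xy by (meson rtrancl_trans)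
  qed
qed

lemma add_disconn:
  assumes fin: "finite V" and xV: "x \<in> V" and yV: "y \<in> V" and ee: "ends e = {x, y}"
    and nc: "(x, y) \<notin> (adj A ends)\<^sup>*"
  shows "ncomp V (insert e A) ends = ncomp V A ends - 1 \<and> ncomp V A ends \<ge> 2"
proof -
  let ?S = "(adj A ends)\<^sup>*"
  define R where "R = comp_rel V A ends"
  define R' where "R' = comp_rel V (insert e A) ends"
  define X where "X = R``{x}"
  define Y where "Y = R``{y}"
  define W where "W = V - (X \<union> Y)"
  have Xd: "X = {b\<in>V. (x, b) \<in> ?S}" using xV unfolding X_def R_def comp_class by simp
  have Yd: "Y = {b\<in>V. (y, b) \<in> ?S}" using yV unfolding Y_def R_def comp_class by simp
  have cR: "a \<in> V \<Longrightarrow> R``{a} = {b\<in>V. (a, b) \<in> ?S}" for a unfolding R_def comp_class by simp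
  have cR': "a \<in> V \<Longrightarrow> R'``{a} = {b\<in>V. (a, b) \<in> (adj (insert e A) ends)\<^sup>*}" for a unfolding R'_def comp_class by simp
  have rel: "(a, b) \<in> (adj (insert e A) ends)\<^sup>* \<longleftrightarrow> (a, b) \<in> ?S \<or>
     (((a, x) \<in> ?S \<or> (a, y) \<in> ?S) \<and> ((x, b) \<in> ?S \<or> (y, b) \<in> ?S))" for a b
    by (rule add_disconn_rel[of ends e x y, OF ee])
  have W1: "a \<in> W \<Longrightarrow> (a, x) \<notin> ?S \<and> (a, y) \<notin> ?S" for a
    unfolding W_def Xd Yd using adj_rtrancl_sym[of a x A ends] adj_rtrancl_sym[of a y A ends] by blast
  have Wc: "a \<in> W \<Longrightarrow> R'``{a} = R``{a}" for a
  proof -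
    assume aW: "a \<in> W"
    then have aV: "a \<in> V" by (simp add: W_def)
    show ?thesis unfolding cR[OF aV] cR'[OF aV] rel using W1[OF aW] by blast
  qed
  have XYc: "a \<in> X \<union> Y \<Longrightarrow> R'``{a} = X \<union> Y" for a
  proof -
    assume a: "a \<in> X \<union> Y"
    then have aV: "a \<in> V" and ax: "(a, x) \<in> ?S \<or> (a, y) \<in> ?S"
      unfolding Xd Yd using adj_rtrancl_sym[of x a A ends] adj_rtrancl_sym[of y a A ends] by blast+
    have ax': "(x, a) \<in> ?S \<or> (y, a) \<in> ?S" using ax adj_rtrancl_sym[of a x A ends] adj_rtrancl_sym[of a y A ends] by blast
    have t1: "(a, b) \<in> ?S \<Longrightarrow> (x, b) \<in> ?S \<or> (y, b) \<in> ?S" for b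
      using ax' rtrancl_trans[of x a "adj A ends" b] rtrancl_trans[of y a "adj A ends" b] by blast
    show ?thesis unfolding cR'[OF aV] rel Xd Yd using ax t1 by blast
  qed
  have V: "V = (X \<union> Y) \<union> W" unfolding W_def Xd Yd by blast
  have xX: "x \<in> X" and yY: "y \<in> Y" using xV yV by (auto simp: Xd Yd)
  have xY: "x \<notin> Y" using nc adj_rtrancl_sym[of y x A ends] unfolding Yd by blast
  have XY: "X \<noteq> Y" using xX xY by blast
  have img: "f ` ((X \<union> Y) \<union> W) = f ` (X \<union> Y) \<union> f ` W" for f :: "'a \<Rightarrow> 'a set" by blast
  have q1: "V // R = {X, Y} \<union> (\<lambda>a. R``{a}) ` W"
  proof -
    have "(\<lambda>a. R``{a}) ` (X \<union> Y) = {X, Y}"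
    proof
      show "(\<lambda>a. R``{a}) ` (X \<union> Y) \<subseteq> {X, Y}"
      proof
        fix K assume "K \<in> (\<lambda>a. R``{a}) ` (X \<union> Y)"
        then obtain a where a: "a \<in> X \<union> Y" "K = R``{a}" by blast
        have eqv: "equiv V R" unfolding R_def by (rule comp_equiv)
        have "(x, a) \<in> R \<or> (y, a) \<in> R" using a(1) unfolding X_def Y_def by blast
        then have "R``{a} = X \<or> R``{a} = Y" unfolding X_def Y_def
          using equiv_class_eq[OF eqv] by metis
        then show "K \<in> {X, Y}" using a by blast
      qed
      show "{X, Y} \<subseteq> (\<lambda>a. R``{a}) ` (X \<union> Y)" using xX yY unfolding X_def Y_def by blast
    qed
    then show ?thesis unfolding quotient_img by (subst V) (simp add: img)
  qed
  have q2: "V // R' = {X \<union> Y} \<union> (\<lambda>a. R``{a}) ` W"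
  proof -
    have "(\<lambda>a. R'``{a}) ` (X \<union> Y) = {X \<union> Y}" using XYc xX by blast
    moreover have "(\<lambda>a. R'``{a}) ` W = (\<lambda>a. R``{a}) ` W" using Wc by simp
    ultimately show ?thesis unfolding quotient_img by (subst V) (simp only: img)
  qed
  have finW: "finite ((\<lambda>a. R``{a}) ` W)" using fin by (simp add: W_def)
  have nW: "K \<in> (\<lambda>a. R``{a}) ` W \<Longrightarrow> x \<notin> K \<and> y \<notin> K" for K
  proof -
    assume "K \<in> (\<lambda>a. R``{a}) ` W"
    then obtain a where a: "a \<in> W" "K = R``{a}" by blast
    then have aV: "a \<in> V" by (simp add: W_def)
    show ?thesis using W1[OF a(1)] a(2) unfolding cR[OF aV] by blast
  qed
  have "card (V // R) = card ((\<lambda>a. R``{a}) ` W) + 2"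
    unfolding q1 using nW xX yY XY finW by (simp add: card_insert_if) blast
  moreover have "card (V // R') = card ((\<lambda>a. R``{a}) ` W) + 1"
    unfolding q2 using nW xX finW by (simp add: card_insert_if) blast
  ultimately show ?thesis unfolding ncomp_def R_def R'_def by simp
qed

lemma ends_two: "card (ends e) \<in> {1, 2} \<Longrightarrow> \<exists>x y. ends e = {x, y}"
  by (auto simp: card_1_singleton_iff card_2_iff)

lemma ncomp_insert_ge:
  assumes fin: "finite V" and eV: "ends e \<subseteq> V" and ce: "card (ends e) \<in> {1, 2}"
  shows "ncomp V A ends \<le> ncomp V (insert e A) ends + 1"
proof -
  obtain x y where ee: "ends e = {x, y}" using ends_two[of ends e, OF ce] by blast
  show ?thesis
  proof (cases "(x, y) \<in> (adj A ends)\<^sup>*")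
    case True
    then have "\<forall>a\<in>ends e. \<forall>b\<in>ends e. (a, b) \<in> (adj A ends)\<^sup>*"
      unfolding ee using adj_rtrancl_sym[of x y A ends] by auto
    then show ?thesis unfolding ncomp_def using add_connected[where e=e and A=A and ends=ends and V=V] by simp
  next
    case False
    then show ?thesis using add_disconn[OF fin _ _ ee False] eV ee by simp
  qed
qed

lemma forest_bound:
  assumes fin: "finite V" and fA: "finite A" and ok: "\<forall>e\<in>A. ends e \<subseteq> V \<and> card (ends e) \<in> {1, 2}"
  shows "card V \<le> card A + ncomp V A ends"
  using fA ok
proof (induction A rule: finite_induct)
  case empty
  then show ?case using ncomp_empty[OF fin, of ends] by simp
next
  case (insert e A)
  have "ncomp V A ends \<le> ncomp V (insert e A) ends + 1"
    using ncomp_insert_ge[OF fin, where ends=ends and e=e and A=A] insert.prems by simp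
  then show ?case using insert by simp
qed

lemma graph_sub: "graph V E ends \<Longrightarrow> A \<subseteq> E \<Longrightarrow> \<forall>e\<in>A. ends e \<subseteq> V \<and> card (ends e) \<in> {1, 2}"
  unfolding graph_def by blast

lemma bridge_ends:
  assumes g: "graph V E ends" and b: "is_bridge V E ends e"
  obtains x y where "ends e = {x, y}" "x \<in> V" "y \<in> V" "(x, y) \<notin> (adj (E - {e}) ends)\<^sup>*"
proof -
  have eE: "e \<in> E" and lt: "ncomp V (E - {e}) ends > ncomp V E ends"
    using b unfolding is_bridge_def is_edge_cut_def by auto
  have fin: "finite V" and eV: "ends e \<subseteq> V" and ce: "card (ends e) \<in> {1,2}" using g eE unfolding graph_def by auto
  obtain x y where ee: "ends e = {x, y}" using ends_two[of ends e, OF ce] by blast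
  have EE: "E = insert e (E - {e})" using eE by blast
  have "(x, y) \<notin> (adj (E - {e}) ends)\<^sup>*"
  proof
    assume "(x, y) \<in> (adj (E - {e}) ends)\<^sup>*"
    then have "\<forall>a\<in>ends e. \<forall>b\<in>ends e. (a, b) \<in> (adj (E - {e}) ends)\<^sup>*"
      unfolding ee using adj_rtrancl_sym[of x y "E - {e}" ends] by auto
    then have "comp_rel V E ends = comp_rel V (E - {e}) ends"
      using add_connected[where e=e and A="E - {e}" and ends=ends and V=V] EE by simp
    then show False using lt unfolding ncomp_def by simp
  qed
  then show ?thesis using that ee eV by blast
qed

lemma stay:
  assumes e1: "\<forall>g\<in>A1. ends g \<subseteq> V1" and e2: "\<forall>g\<in>B. ends g \<inter> V1 = {}"
    and p: "(a, b) \<in> (adj (A1 \<union> B) ends)\<^sup>*" and a: "a \<in> V1"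
  shows "b \<in> V1 \<and> (a, b) \<in> (adj A1 ends)\<^sup>*"
  using p
proof (induction rule: rtrancl_induct)
  case base then show ?case using a by simp
next
  case (step b c)
  from step.hyps(2) obtain g where g: "g \<in> A1 \<union> B" "b \<in> ends g" "c \<in> ends g" unfolding adj_def by blast
  have bV: "b \<in> V1" using step.IH by simp
  have gA: "g \<in> A1" using g bV e2 by blast
  have "c \<in> V1" using e1 gA g by blast
  moreover have "(b, c) \<in> adj A1 ends" using gA g unfolding adj_def by blast
  ultimately show ?case using step.IH by (meson rtrancl.rtrancl_into_rtrancl)
qed

lemma class_disj:
  assumes e1: "\<forall>g\<in>A1. ends g \<subseteq> V1" and e2: "\<forall>g\<in>B. ends g \<inter> V1 = {}" and a: "a \<in> V1"
    and sub: "V1 \<subseteq> W"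
  shows "comp_rel W (A1 \<union> B) ends `` {a} = comp_rel V1 A1 ends `` {a}"
proof -
  have m: "(adj A1 ends)\<^sup>* \<subseteq> (adj (A1 \<union> B) ends)\<^sup>*" by (rule rtrancl_mono) (rule adj_mono, blast)
  have "{b \<in> W. (a, b) \<in> (adj (A1 \<union> B) ends)\<^sup>*} = {b \<in> V1. (a, b) \<in> (adj A1 ends)\<^sup>*}"
  proof (intro set_eqI iffI)
    fix b assume "b \<in> {b \<in> W. (a, b) \<in> (adj (A1 \<union> B) ends)\<^sup>*}"
    then have "(a, b) \<in> (adj (A1 \<union> B) ends)\<^sup>*" by simp
    then show "b \<in> {b \<in> V1. (a, b) \<in> (adj A1 ends)\<^sup>*}" using stay[OF e1 e2 _ a] by simp
  next
    fix b assume "b \<in> {b \<in> V1. (a, b) \<in> (adj A1 ends)\<^sup>*}"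
    then show "b \<in> {b \<in> W. (a, b) \<in> (adj (A1 \<union> B) ends)\<^sup>*}" using m sub by blast
  qed
  then show ?thesis unfolding comp_class using a sub by auto
qed

lemma ncomp_disj:
  assumes fin1: "finite V1" and fin2: "finite V2" and disj: "V1 \<inter> V2 = {}"
    and e1: "\<forall>g\<in>A1. ends g \<subseteq> V1" and e2: "\<forall>g\<in>A2. ends g \<subseteq> V2"
  shows "ncomp (V1 \<union> V2) (A1 \<union> A2) ends = ncomp V1 A1 ends + ncomp V2 A2 ends"
proof -
  let ?R = "comp_rel (V1 \<union> V2) (A1 \<union> A2) ends"
  have e2': "\<forall>g\<in>A2. ends g \<inter> V1 = {}" using e2 disj by blast
  have e1': "\<forall>g\<in>A1. ends g \<inter> V2 = {}" using e1 disj by blast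
  have c1: "a \<in> V1 \<Longrightarrow> ?R``{a} = comp_rel V1 A1 ends `` {a}" for a
    using class_disj[OF e1 e2', of a "V1 \<union> V2"] by blast
  have c2: "a \<in> V2 \<Longrightarrow> ?R``{a} = comp_rel V2 A2 ends `` {a}" for a
    using class_disj[OF e2 e1', of a "V1 \<union> V2"] by (simp add: Un_commute)
  have q: "(V1 \<union> V2) // ?R = V1 // comp_rel V1 A1 ends \<union> V2 // comp_rel V2 A2 ends"
    unfolding quotient_img image_Un using c1 c2 by simp
  have d: "V1 // comp_rel V1 A1 ends \<inter> V2 // comp_rel V2 A2 ends = {}"
  proof -
    have "K \<subseteq> V1 \<and> K \<noteq> {}" if "K \<in> V1 // comp_rel V1 A1 ends" for K
      using that unfolding quotient_img comp_class by auto
    moreover have "K \<subseteq> V2" if "K \<in> V2 // comp_rel V2 A2 ends" for K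
      using that unfolding quotient_img comp_class by auto
    ultimately show ?thesis using disj by blast
  qed
  show ?thesis unfolding ncomp_def q
    by (rule card_Un_disjoint) (use fin1 fin2 d in \<open>auto simp: finite_ncomp_quot\<close>)
qed

lemma quot_card_map:
  assumes eR: "equiv V R" and eR': "equiv W R'" and fV: "f ` V = W"
    and rel: "\<And>a b. a \<in> V \<Longrightarrow> b \<in> V \<Longrightarrow> (a, b) \<in> R \<longleftrightarrow> (f a, f b) \<in> R'"
  shows "card (V // R) = card (W // R')"
proof -
  have cl: "f ` (R``{a}) = R'``{f a}" if a: "a \<in> V" for a
  proof
    show "f ` (R``{a}) \<subseteq> R'``{f a}"
    proof
      fix c assume "c \<in> f ` (R``{a})"
      then obtain b where b: "(a, b) \<in> R" "c = f b" by blast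
      have "b \<in> V" using b eR unfolding equiv_def refl_on_def by blast
      then show "c \<in> R'``{f a}" using rel[OF a] b by blast
    qed
    show "R'``{f a} \<subseteq> f ` (R``{a})"
    proof
      fix c assume c: "c \<in> R'``{f a}"
      then have "c \<in> W" using eR' unfolding equiv_def refl_on_def by blast
      then obtain b where b: "b \<in> V" "c = f b" using fV by blast
      then have "(a, b) \<in> R" using rel[OF a b(1)] c by blast
      then show "c \<in> f ` (R``{a})" using b by blast
    qed
  qed
  have inj: "inj_on (\<lambda>X. f ` X) (V // R)"
  proof (rule inj_onI)
    fix X Y assume X: "X \<in> V // R" and Y: "Y \<in> V // R" and eq: "f ` X = f ` Y"
    obtain a where a: "a \<in> V" "X = R``{a}" using X unfolding quotient_img by blast
    obtain b where b: "b \<in> V" "Y = R``{b}" using Y unfolding quotient_img by blast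
    have "R'``{f a} = R'``{f b}" using eq a b cl by simp
    moreover have "f b \<in> W" using b fV by blast
    moreover have "f a \<in> W" using a fV by blast
    ultimately have "(f a, f b) \<in> R'" using eq_equiv_class_iff[OF eR'] by blast
    then have "(a, b) \<in> R" using rel a b by blast
    then show "X = Y" using a b equiv_class_eq[OF eR] by simp
  qed
  have img: "(\<lambda>X. f ` X) ` (V // R) = W // R'"
  proof -
    have "(\<lambda>X. f ` X) ` (V // R) = (\<lambda>a. f ` (R``{a})) ` V" unfolding quotient_img by (simp add: image_image)
    also have "\<dots> = (\<lambda>a. R'``{f a}) ` V" using cl by simp
    also have "\<dots> = W // R'" unfolding quotient_img fV[symmetric] by (simp add: image_image)
    finally show ?thesis .
  qed
  show ?thesis using card_image[OF inj] img by simp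
qed

lemma ncomp_contract:
  assumes fin: "finite V" and eA: "e \<in> A" and ee: "ends e = {u, v}" and uv: "u \<noteq> v"
    and uV: "u \<in> V" and vV: "v \<in> V"
  shows "ncomp (V - {v}) (A - {e}) (contract_ends ends u v) = ncomp V A ends"
proof -
  define f where "f = (\<lambda>x. if x = v then u else x)"
  define ends' where "ends' = contract_ends ends u v"
  have e': "ends' g = f ` ends g" for g unfolding ends'_def contract_ends_def f_def by simp
  let ?S = "(adj A ends)\<^sup>*"
  let ?S' = "(adj (A - {e}) ends')\<^sup>*"
  have uvS: "(u, v) \<in> ?S" "(v, u) \<in> ?S" using eA ee unfolding adj_def by blast+
  have samef: "f a = f b \<Longrightarrow> (a, b) \<in> ?S" for a b
    using uvS unfolding f_def by (auto split: if_splits)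
  have fw: "(a, b) \<in> ?S \<Longrightarrow> (f a, f b) \<in> ?S'" for a b
  proof (induction rule: rtrancl_induct)
    case base then show ?case by simp
  next
    case (step b c)
    from step.hyps(2) obtain g where g: "g \<in> A" "b \<in> ends g" "c \<in> ends g" unfolding adj_def by blast
    show ?case
    proof (cases "g = e")
      case True
      then have "f b = f c" using g ee unfolding f_def by auto
      then show ?thesis using step.IH by simp
    next
      case False
      then have "(f b, f c) \<in> adj (A - {e}) ends'" using g unfolding adj_def e' by blast
      then show ?thesis using step.IH by (meson rtrancl.rtrancl_into_rtrancl)
    qed
  qed
  have bw: "(a', b') \<in> ?S' \<Longrightarrow> f a = a' \<Longrightarrow> \<forall>b. f b = b' \<longrightarrow> (a, b) \<in> ?S" for a a' b'
  proof (induction rule: rtrancl_induct)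
    case base then show ?case using samef by metis
  next
    case (step y' z')
    from step.hyps(2) obtain g where g: "g \<in> A - {e}" "y' \<in> f ` ends g" "z' \<in> f ` ends g" unfolding adj_def e' by blast
    then obtain y0 z0 where y0: "y0 \<in> ends g" "y' = f y0" and z0: "z0 \<in> ends g" "z' = f z0" by blast
    have ay: "(a, y0) \<in> ?S" using step.IH step.prems y0 by blast
    have yz: "(y0, z0) \<in> adj A ends" using g y0 z0 unfolding adj_def by blast
    show ?case
    proof (intro allI impI)
      fix b assume "f b = z'"
      then have "(z0, b) \<in> ?S" using samef z0 by metis
      then show "(a, b) \<in> ?S" using ay yz by (meson rtrancl_trans r_into_rtrancl)
    qed
  qed
  have fV: "f ` V = V - {v}" using uV uv unfolding f_def by auto
  have rel: "(a, b) \<in> comp_rel V A ends \<longleftrightarrow> (f a, f b) \<in> comp_rel (V - {v}) (A - {e}) ends'"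
    if a: "a \<in> V" and b: "b \<in> V" for a b
  proof -
    have "f a \<in> V - {v}" "f b \<in> V - {v}" using a b fV by blast+
    then show ?thesis unfolding comp_rel_def using a b fw bw by blast
  qed
  have "card (V // comp_rel V A ends) = card ((V - {v}) // comp_rel (V - {v}) (A - {e}) ends')"
    by (rule quot_card_map[OF comp_equiv comp_equiv fV]) (use rel in blast)
  then show ?thesis unfolding ncomp_def ends'_def[symmetric] by simp
qed




definition nul :: "'v set \<Rightarrow> 'e set \<Rightarrow> ('e \<Rightarrow> 'v set) \<Rightarrow> nat" where
  "nul V A ends = card A + ncomp V A ends - card V"

definition fpoly :: "'v set \<Rightarrow> 'e set \<Rightarrow> ('e \<Rightarrow> 'v set) \<Rightarrow> real poly" where
  "fpoly V E ends = (\<Sum>A\<in>Pow E. monom ((-1) ^ (card E - card A)) (nul V A ends))"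

lemma sum_Pow_split:
  assumes fin: "finite E" and e: "e \<in> E"
  shows "(\<Sum>A\<in>Pow E. h A) = (\<Sum>A\<in>Pow (E - {e}). h A + h (insert e A))"
proof -
  have EE: "E = insert e (E - {e})" using e by blast
  have P: "Pow E = Pow (E - {e}) \<union> insert e ` Pow (E - {e})" by (subst EE) (rule Pow_insert)
  have d: "Pow (E - {e}) \<inter> insert e ` Pow (E - {e}) = {}" by blast
  have inj: "inj_on (insert e) (Pow (E - {e}))" by (rule inj_onI) blast
  have "(\<Sum>A\<in>Pow E. h A) = (\<Sum>A\<in>Pow (E - {e}). h A) + (\<Sum>A\<in>insert e ` Pow (E - {e}). h A)"
    unfolding P by (rule sum.union_disjoint) (use fin d in auto)
  also have "(\<Sum>A\<in>insert e ` Pow (E - {e}). h A) = (\<Sum>A\<in>Pow (E - {e}). h (insert e A))"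
    by (rule sum.reindex[OF inj, unfolded o_def])
  finally show ?thesis by (simp add: sum.distrib)
qed

lemma lin_monom: "[:-1, 1:] * monom (c::real) n = monom c (Suc n) - monom c n"
  by (simp add: monom_Suc algebra_simps)

lemma monom_neg: "monom (- c) n = - monom (c::real) n"
  by (simp add: poly_eq_iff coeff_monom)

lemma sign_Suc: "k < m \<Longrightarrow> (-1::real) ^ (m - k) = - ((-1) ^ (m - 1 - k))"
  by (metis Suc_diff_Suc diff_Suc_1 diff_commute diff_Suc_eq_diff_pred minus_one_mult_self power_Suc mult_minus1)

lemma fpoly_empty: "finite V \<Longrightarrow> fpoly V {} ends = 1"
  unfolding fpoly_def nul_def using ncomp_empty[of V ends] by simp

lemma fpoly_bridge:
  assumes g: "graph V E ends" and b: "is_bridge V E ends e"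
  shows "fpoly V E ends = 0"
proof -
  obtain x y where ee: "ends e = {x, y}" and xV: "x \<in> V" and yV: "y \<in> V"
    and nc: "(x, y) \<notin> (adj (E - {e}) ends)\<^sup>*" using bridge_ends[OF g b] by blast
  have eE: "e \<in> E" using b unfolding is_bridge_def by simp
  have finV: "finite V" and finE: "finite E" using g unfolding graph_def by auto
  let ?h = "\<lambda>A. monom ((-1::real) ^ (card E - card A)) (nul V A ends)"
  have z: "?h A + ?h (insert e A) = 0" if A: "A \<in> Pow (E - {e})" for A
  proof -
    have ncA: "(x, y) \<notin> (adj A ends)\<^sup>*"
    proof
      assume "(x, y) \<in> (adj A ends)\<^sup>*"
      moreover have "(adj A ends)\<^sup>* \<subseteq> (adj (E - {e}) ends)\<^sup>*" by (rule rtrancl_mono, rule adj_mono) (use A in blast)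
      ultimately show False using nc by blast
    qed
    have c: "ncomp V (insert e A) ends = ncomp V A ends - 1" "ncomp V A ends \<ge> 2"
      using add_disconn[OF finV xV yV ee ncA] by auto
    have fA: "finite A" using A finE finite_subset by auto
    have eA: "e \<notin> A" using A by blast
    have cardA: "card (insert e A) = Suc (card A)" using fA eA by simp
    have "card A \<le> card (E - {e})" by (rule card_mono) (use A finE in auto)
    moreover have "card (E - {e}) = card E - 1" by (rule card_Diff_singleton[OF eE])
    moreover have "card E > 0" using eE finE card_gt_0_iff by blast
    ultimately have lt: "card A < card E" by linarith
    have n: "nul V (insert e A) ends = nul V A ends" unfolding nul_def cardA c(1) using c(2) by simp
    have s: "(-1::real) ^ (card E - card (insert e A)) = - ((-1) ^ (card E - card A))"
    proof -
      have "card E - Suc (card A) = card E - 1 - card A" by simp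
      then show ?thesis unfolding cardA sign_Suc[OF lt] by simp
    qed
    show ?thesis unfolding n s monom_neg by simp
  qed
  show ?thesis unfolding fpoly_def sum_Pow_split[OF finE eE] using z by simp
qed

lemma card_lt_of_sub:
  assumes "A \<subseteq> E - {e}" "e \<in> E" "finite E"
  shows "card A < card E" "finite A" "e \<notin> A" "card (insert e A) = Suc (card A)"
proof -
  have "card A \<le> card (E - {e})" by (rule card_mono) (use assms in auto)
  moreover have "card (E - {e}) = card E - 1" by (rule card_Diff_singleton[OF assms(2)])
  moreover have "card E > 0" using assms card_gt_0_iff by blast
  ultimately show "card A < card E" by linarith
  show fA: "finite A" using assms finite_subset by auto
  show eA: "e \<notin> A" using assms by blast
  show "card (insert e A) = Suc (card A)" using fA eA by simp
qed

lemma sign_ins: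
  assumes "card A < m"
  shows "(-1::real) ^ (m - Suc (card A)) = (-1) ^ (m - 1 - card A)"
proof -
  have "m - Suc (card A) = m - 1 - card A" by simp
  then show ?thesis by simp
qed

lemma fpoly_loop:
  assumes g: "graph V E ends" and eE: "e \<in> E" and l: "is_loop ends e"
  shows "fpoly V E ends = [:-1, 1:] * fpoly V (E - {e}) ends"
proof -
  have finV: "finite V" and finE: "finite E" using g unfolding graph_def by auto
  have cE: "card (E - {e}) = card E - 1" by (rule card_Diff_singleton[OF eE])
  obtain x where ex: "ends e = {x}" using l unfolding is_loop_def by (auto simp: card_1_singleton_iff)
  let ?h = "\<lambda>A. monom ((-1::real) ^ (card E - card A)) (nul V A ends)"
  let ?k = "\<lambda>A. monom ((-1::real) ^ (card (E - {e}) - card A)) (nul V A ends)"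
  have z: "?h A + ?h (insert e A) = [:-1, 1:] * ?k A" if A: "A \<in> Pow (E - {e})" for A
  proof -
    note C = card_lt_of_sub[of A E e] 
    have As: "A \<subseteq> E - {e}" using A by blast
    have cc: "ncomp V (insert e A) ends = ncomp V A ends"
      unfolding ncomp_def using add_connected[where e=e and A=A and ends=ends and V=V] ex by simp
    have fb: "card V \<le> card A + ncomp V A ends"
      by (rule forest_bound[OF finV C(2)[OF As eE finE]]) (use graph_sub[OF g] As in blast)
    have n: "nul V (insert e A) ends = Suc (nul V A ends)"
      unfolding nul_def C(4)[OF As eE finE] cc using fb by simp
    have s1: "(-1::real) ^ (card E - card A) = - ((-1) ^ (card E - 1 - card A))"
      by (rule sign_Suc[OF C(1)[OF As eE finE]])
    have s2: "(-1::real) ^ (card E - card (insert e A)) = (-1) ^ (card E - 1 - card A)"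
      unfolding C(4)[OF As eE finE] by (rule sign_ins[OF C(1)[OF As eE finE]])
    show ?thesis unfolding n s1 s2 cE lin_monom monom_neg by simp
  qed
  have "fpoly V E ends = (\<Sum>A\<in>Pow (E - {e}). [:-1, 1:] * ?k A)"
    unfolding fpoly_def sum_Pow_split[OF finE eE] using z by (rule sum.cong[OF refl])
  also have "\<dots> = [:-1, 1:] * fpoly V (E - {e}) ends" unfolding fpoly_def by (simp add: sum_distrib_left)
  finally show ?thesis .
qed

lemma fpoly_contr:
  assumes g: "graph V E ends" and eE: "e \<in> E" and ee: "ends e = {u, v}" and uv: "u \<noteq> v"
  shows "fpoly V E ends = fpoly (V - {v}) (E - {e}) (contract_ends ends u v) - fpoly V (E - {e}) ends"
proof -
  have finV: "finite V" and finE: "finite E" using g unfolding graph_def by auto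
  have uV: "u \<in> V" and vV: "v \<in> V" using g eE ee unfolding graph_def by auto
  have cE: "card (E - {e}) = card E - 1" by (rule card_Diff_singleton[OF eE])
  have cV: "card (V - {v}) = card V - 1" by (rule card_Diff_singleton[OF vV])
  have "card V > 0" using vV finV card_gt_0_iff by blast
  then have V1: "card V \<ge> 1" by simp
  let ?h = "\<lambda>A. monom ((-1::real) ^ (card E - card A)) (nul V A ends)"
  let ?k = "\<lambda>A. monom ((-1::real) ^ (card (E - {e}) - card A)) (nul V A ends)"
  let ?c = "\<lambda>A. monom ((-1::real) ^ (card (E - {e}) - card A)) (nul (V - {v}) A (contract_ends ends u v))"
  have z: "?h A + ?h (insert e A) = ?c A - ?k A" if A: "A \<in> Pow (E - {e})" for A
  proof -
    note C = card_lt_of_sub[of A E e]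
    have As: "A \<subseteq> E - {e}" using A by blast
    have cc: "ncomp (V - {v}) A (contract_ends ends u v) = ncomp V (insert e A) ends"
    proof -
      have "ncomp (V - {v}) (insert e A - {e}) (contract_ends ends u v) = ncomp V (insert e A) ends"
        by (rule ncomp_contract[where e=e and ends=ends, OF finV _ ee uv uV vV]) simp
      moreover have "insert e A - {e} = A" using C(3)[OF As eE finE] by simp
      ultimately show ?thesis by simp
    qed
    have n: "nul V (insert e A) ends = nul (V - {v}) A (contract_ends ends u v)"
      unfolding nul_def C(4)[OF As eE finE] cc cV using V1 by simp
    have s1: "(-1::real) ^ (card E - card A) = - ((-1) ^ (card E - 1 - card A))"
      by (rule sign_Suc[OF C(1)[OF As eE finE]])
    have s2: "(-1::real) ^ (card E - card (insert e A)) = (-1) ^ (card E - 1 - card A)"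
      unfolding C(4)[OF As eE finE] by (rule sign_ins[OF C(1)[OF As eE finE]])
    show ?thesis unfolding n s1 s2 cE monom_neg by simp
  qed
  have "fpoly V E ends = (\<Sum>A\<in>Pow (E - {e}). ?c A - ?k A)"
    unfolding fpoly_def sum_Pow_split[OF finE eE] using z by (rule sum.cong[OF refl])
  also have "\<dots> = fpoly (V - {v}) (E - {e}) (contract_ends ends u v) - fpoly V (E - {e}) ends"
    unfolding fpoly_def by (simp add: sum_subtractf)
  finally show ?thesis .
qed

lemma fpoly_disj:
  assumes g1: "graph V1 E1 ends" and g2: "graph V2 E2 ends"
    and dV: "V1 \<inter> V2 = {}" and dE: "E1 \<inter> E2 = {}"
  shows "fpoly (V1 \<union> V2) (E1 \<union> E2) ends = fpoly V1 E1 ends * fpoly V2 E2 ends"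
proof -
  have fV1: "finite V1" and fE1: "finite E1" using g1 unfolding graph_def by auto
  have fV2: "finite V2" and fE2: "finite E2" using g2 unfolding graph_def by auto
  let ?U = "\<lambda>(A1, A2). A1 \<union> (A2 :: 'b set)"
  let ?h = "\<lambda>A. monom ((-1::real) ^ (card (E1 \<union> E2) - card A)) (nul (V1 \<union> V2) A ends)"
  let ?h1 = "\<lambda>A. monom ((-1::real) ^ (card E1 - card A)) (nul V1 A ends)"
  let ?h2 = "\<lambda>A. monom ((-1::real) ^ (card E2 - card A)) (nul V2 A ends)"
  have inj: "inj_on ?U (Pow E1 \<times> Pow E2)"
  proof (rule inj_onI)
    fix p q assume p: "p \<in> Pow E1 \<times> Pow E2" and q: "q \<in> Pow E1 \<times> Pow E2" and eq0: "?U p = ?U q"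
    obtain A1 A2 where pp: "p = (A1, A2)" by (cases p)
    obtain B1 B2 where qq: "q = (B1, B2)" by (cases q)
    have a: "A1 \<subseteq> E1" "A2 \<subseteq> E2" "B1 \<subseteq> E1" "B2 \<subseteq> E2" using p q pp qq by auto
    have eq: "A1 \<union> A2 = B1 \<union> B2" using eq0 pp qq by simp
    have "A1 = (A1 \<union> A2) \<inter> E1" "B1 = (B1 \<union> B2) \<inter> E1" using a dE by blast+
    moreover have "A2 = (A1 \<union> A2) \<inter> E2" "B2 = (B1 \<union> B2) \<inter> E2" using a dE by blast+
    ultimately show "p = q" using eq pp qq by metis
  qed
  have img: "?U ` (Pow E1 \<times> Pow E2) = Pow (E1 \<union> E2)"
  proof
    show "?U ` (Pow E1 \<times> Pow E2) \<subseteq> Pow (E1 \<union> E2)" by blast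
    show "Pow (E1 \<union> E2) \<subseteq> ?U ` (Pow E1 \<times> Pow E2)"
    proof
      fix A assume "A \<in> Pow (E1 \<union> E2)"
      then have "A = ?U (A \<inter> E1, A \<inter> E2)" "(A \<inter> E1, A \<inter> E2) \<in> Pow E1 \<times> Pow E2" by auto
      then show "A \<in> ?U ` (Pow E1 \<times> Pow E2)" by blast
    qed
  qed
  have tm: "?h (A1 \<union> A2) = ?h1 A1 * ?h2 A2" if a1: "A1 \<subseteq> E1" and a2: "A2 \<subseteq> E2" for A1 A2
  proof -
    have fA1: "finite A1" using a1 fE1 finite_subset by auto
    have fA2: "finite A2" using a2 fE2 finite_subset by auto
    have dA: "A1 \<inter> A2 = {}" using a1 a2 dE by blast
    have cA: "card (A1 \<union> A2) = card A1 + card A2" using card_Un_disjoint[OF fA1 fA2 dA] .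
    have cE: "card (E1 \<union> E2) = card E1 + card E2" using card_Un_disjoint[OF fE1 fE2 dE] .
    have cV: "card (V1 \<union> V2) = card V1 + card V2" using card_Un_disjoint[OF fV1 fV2 dV] .
    have le1: "card A1 \<le> card E1" using card_mono[OF fE1 a1] .
    have le2: "card A2 \<le> card E2" using card_mono[OF fE2 a2] .
    have ok1: "\<forall>g\<in>A1. ends g \<subseteq> V1 \<and> card (ends g) \<in> {1, 2}" using graph_sub[OF g1 a1] .
    have ok2: "\<forall>g\<in>A2. ends g \<subseteq> V2 \<and> card (ends g) \<in> {1, 2}" using graph_sub[OF g2 a2] .
    have nc: "ncomp (V1 \<union> V2) (A1 \<union> A2) ends = ncomp V1 A1 ends + ncomp V2 A2 ends"
      by (rule ncomp_disj[OF fV1 fV2 dV]) (use ok1 ok2 in blast)+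
    have fb1: "card V1 \<le> card A1 + ncomp V1 A1 ends" by (rule forest_bound[OF fV1 fA1 ok1])
    have fb2: "card V2 \<le> card A2 + ncomp V2 A2 ends" by (rule forest_bound[OF fV2 fA2 ok2])
    have n: "nul (V1 \<union> V2) (A1 \<union> A2) ends = nul V1 A1 ends + nul V2 A2 ends"
      unfolding nul_def cA cV nc using fb1 fb2 by simp
    have s: "card (E1 \<union> E2) - card (A1 \<union> A2) = (card E1 - card A1) + (card E2 - card A2)"
      unfolding cA cE using le1 le2 by simp
    show ?thesis unfolding n s power_add mult_monom by simp
  qed
  have "fpoly (V1 \<union> V2) (E1 \<union> E2) ends = (\<Sum>p\<in>Pow E1 \<times> Pow E2. ?h (?U p))"
    unfolding fpoly_def img[symmetric] by (rule sum.reindex[OF inj, unfolded o_def])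
  also have "\<dots> = (\<Sum>A1\<in>Pow E1. \<Sum>A2\<in>Pow E2. ?h (A1 \<union> A2))"
    by (simp add: sum.cartesian_product split_def)
  also have "\<dots> = (\<Sum>A1\<in>Pow E1. \<Sum>A2\<in>Pow E2. ?h1 A1 * ?h2 A2)"
    using tm by (intro sum.cong refl) auto
  also have "\<dots> = fpoly V1 E1 ends * fpoly V2 E2 ends"
    unfolding fpoly_def by (simp add: sum_product)
  finally show ?thesis .
qed

lemma flow_poly_fpoly: "flow_poly V E ends p \<Longrightarrow> p = fpoly V E ends"
proof (induction rule: flow_poly.induct)
  case (empty V ends)
  then show ?case using fpoly_empty[of V ends] unfolding graph_def by simp
next
  case (bridge V E ends e)
  then show ?case using fpoly_bridge by metis
next
  case (disj_union V E ends V1 E1 V2 E2 p1 p2)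
  then show ?case using fpoly_disj[of V1 E1 ends V2 E2] by simp
next
  case (loop V E ends e p)
  then show ?case using fpoly_loop[of V E ends e] by simp
next
  case (del_contr V E ends e u v p1 p2)
  then show ?case using fpoly_contr[of V E ends e u v] by simp
qed




lemma ncomp_pos: assumes "finite V" "V \<noteq> {}" shows "ncomp V A ends \<ge> 1"
proof -
  have "V // comp_rel V A ends \<noteq> {}" using assms(2) unfolding quotient_img by blast
  moreover have "finite (V // comp_rel V A ends)" by (rule finite_ncomp_quot[OF assms(1)])
  ultimately have "card (V // comp_rel V A ends) \<noteq> 0" by simp
  then show ?thesis unfolding ncomp_def by simp
qed

lemma ncomp_ge2:
  assumes fin: "finite V" and a: "a \<in> V" and b: "b \<in> V" and nc: "(a, b) \<notin> (adj A ends)\<^sup>*"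
  shows "ncomp V A ends \<ge> 2"
proof -
  let ?R = "comp_rel V A ends"
  have "?R``{a} \<noteq> ?R``{b}"
  proof
    assume "?R``{a} = ?R``{b}"
    moreover have "b \<in> ?R``{b}" using b unfolding comp_rel_def by simp
    ultimately have "b \<in> ?R``{a}" by simp
    then show False using nc unfolding comp_rel_def by simp
  qed
  moreover have "{?R``{a}, ?R``{b}} \<subseteq> V // ?R" using a b unfolding quotient_img by blast
  ultimately have "card {?R``{a}, ?R``{b}} \<le> card (V // ?R)"
    using finite_ncomp_quot[OF fin] by (intro card_mono) auto
  then show ?thesis using \<open>?R``{a} \<noteq> ?R``{b}\<close> unfolding ncomp_def by simp
qed

lemma ncomp_conn:
  assumes fin: "finite V" and c: "connected_graph V E ends"
  shows "ncomp V E ends = 1"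
proof -
  have "V // comp_rel V E ends = {V}"
  proof -
    have "comp_rel V E ends `` {a} = V" if "a \<in> V" for a
      using c that unfolding connected_graph_def comp_rel_def by auto
    then show ?thesis using c unfolding quotient_img connected_graph_def by auto
  qed
  then show ?thesis unfolding ncomp_def by simp
qed

lemma cut_bound:
  assumes g: "graph V E ends" and conn: "connected_graph V E ends"
    and nb: "\<forall>e\<in>E. \<not> is_bridge V E ends e" and n2: "k_edge_cuts 2 V E ends = {}"
    and S: "S \<subseteq> E" and c2: "ncomp V (E - S) ends \<ge> 2"
  shows "3 * ncomp V (E - S) ends \<le> 2 * card S"
proof -
  have finV: "finite V" and finE: "finite E" using g unfolding graph_def by auto
  have finS: "finite S" using S finE finite_subset by auto
  have c1: "ncomp V E ends = 1" by (rule ncomp_conn[OF finV conn])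
  define R where "R = comp_rel V (E - S) ends"
  define Q where "Q = V // R"
  have eqv: "equiv V R" unfolding R_def by (rule comp_equiv)
  have finQ: "finite Q" unfolding Q_def R_def by (rule finite_ncomp_quot[OF finV])
  have cQ: "card Q = ncomp V (E - S) ends" unfolding Q_def R_def ncomp_def by simp
  define d where "d K = {g\<in>E. ends g \<inter> K \<noteq> {} \<and> \<not> ends g \<subseteq> K}" for K
  have endsV: "g \<in> E \<Longrightarrow> ends g \<subseteq> V" for g using g unfolding graph_def by auto
  have Qc: "K \<in> Q \<Longrightarrow> \<exists>a\<in>V. K = R``{a}" for K unfolding Q_def quotient_img by blast
  have Rsub: "R``{a} \<subseteq> V" for a unfolding R_def comp_rel_def by blast
  have Rself: "a \<in> V \<Longrightarrow> a \<in> R``{a}" for a unfolding R_def comp_rel_def by simp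
  have Kcl: "K \<in> Q \<Longrightarrow> x \<in> K \<Longrightarrow> K = R``{x}" for K x
  proof -
    assume K: "K \<in> Q" and x: "x \<in> K"
    obtain a where a: "a \<in> V" "K = R``{a}" using Qc[OF K] by blast
    then have "(a, x) \<in> R" using x by simp
    then show ?thesis using a equiv_class_eq[OF eqv] by simp
  qed
  have KV: "K \<in> Q \<Longrightarrow> K \<subseteq> V" for K using Qc Rsub by blast
  have Kne: "K \<in> Q \<Longrightarrow> \<exists>a. a \<in> K" for K using Qc Rself by blast
  have dS: "d K \<subseteq> S" if K: "K \<in> Q" for K
  proof
    fix g assume gd: "g \<in> d K"
    show "g \<in> S"
    proof (rule ccontr)
      assume gS: "g \<notin> S"
      from gd obtain x where x: "x \<in> ends g" "x \<in> K" and nsub: "\<not> ends g \<subseteq> K" and gE: "g \<in> E"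
        unfolding d_def by blast
      have "ends g \<subseteq> K"
      proof
        fix y assume y: "y \<in> ends g"
        have "(x, y) \<in> adj (E - S) ends" using x y gE gS unfolding adj_def by blast
        moreover have "x \<in> V" "y \<in> V" using x KV[OF K] endsV[OF gE] y by blast+
        ultimately have "(x, y) \<in> R" unfolding R_def comp_rel_def by auto
        then show "y \<in> K" using Kcl[OF K x(2)] by blast
      qed
      then show False using nsub by blast
    qed
  qed
  have d3: "card (d K) \<ge> 3" if K: "K \<in> Q" for K
  proof -
    obtain a where aK: "a \<in> K" using Kne[OF K] by blast
    have aV: "a \<in> V" using aK KV[OF K] by blast
    have "card Q \<ge> 2" using cQ c2 by simp
    have "\<exists>K'\<in>Q. K' \<noteq> K"
    proof (rule ccontr)
      assume "\<not> (\<exists>K'\<in>Q. K' \<noteq> K)"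
      then have "Q \<subseteq> {K}" by blast
      then have "card Q \<le> card {K}" by (intro card_mono) auto
      then show False using \<open>card Q \<ge> 2\<close> by simp
    qed
    then obtain K' where K': "K' \<in> Q" "K' \<noteq> K" by blast
    obtain b where bK': "b \<in> K'" using Kne[OF K'(1)] by blast
    have bV: "b \<in> V" using bK' KV[OF K'(1)] by blast
    have bK: "b \<notin> K" using quotient_disj[OF eqv] K K' bK' unfolding Q_def by blast
    have stayK: "(a, w) \<in> (adj (E - d K) ends)\<^sup>* \<Longrightarrow> w \<in> K" for w
    proof (induction rule: rtrancl_induct)
      case base then show ?case using aK by simp
    next
      case (step w z)
      from step.hyps(2) obtain g where g: "g \<in> E - d K" "w \<in> ends g" "z \<in> ends g" unfolding adj_def by blast
      then have "ends g \<subseteq> K" using step.IH unfolding d_def by blast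
      then show ?case using g by blast
    qed
    have "ncomp V (E - d K) ends \<ge> 2"
      by (rule ncomp_ge2[OF finV aV bV]) (use stayK bK in blast)
    then have cut: "ncomp V (E - d K) ends > ncomp V E ends" using c1 by simp
    have dE: "d K \<subseteq> E" unfolding d_def by blast
    have fd: "finite (d K)" using dE finE finite_subset by auto
    have "card (d K) \<noteq> 0"
    proof
      assume "card (d K) = 0" then have "d K = {}" using fd by simp
      then show False using cut by simp
    qed
    moreover have "card (d K) \<noteq> 1"
    proof
      assume "card (d K) = 1" then obtain g where "d K = {g}" by (auto simp: card_1_singleton_iff)
      then have "is_bridge V E ends g" using cut dE unfolding is_bridge_def is_edge_cut_def by simp
      then show False using nb \<open>d K = {g}\<close> dE by blast
    qed
    moreover have "card (d K) \<noteq> 2"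
    proof
      assume "card (d K) = 2"
      then have "d K \<in> k_edge_cuts 2 V E ends" using cut dE unfolding k_edge_cuts_def is_edge_cut_def by simp
      then show False using n2 by simp
    qed
    ultimately show ?thesis by linarith
  qed
  have cnt: "card {K\<in>Q. g \<in> d K} \<le> 2" if gS: "g \<in> S" for g
  proof -
    have gE: "g \<in> E" using gS S by blast
    have ce: "card (ends g) \<in> {1, 2}" using g gE unfolding graph_def by auto
    have "card (ends g) > 0" using ce by auto
    then have fe: "finite (ends g)" by (rule card_ge_0_finite)
    have "{K\<in>Q. g \<in> d K} \<subseteq> (\<lambda>x. R``{x}) ` ends g"
    proof
      fix K assume "K \<in> {K\<in>Q. g \<in> d K}"
      then have K: "K \<in> Q" and "ends g \<inter> K \<noteq> {}" unfolding d_def by auto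
      then obtain x where "x \<in> ends g" "x \<in> K" by blast
      then show "K \<in> (\<lambda>x. R``{x}) ` ends g" using Kcl[OF K] by blast
    qed
    then have "card {K\<in>Q. g \<in> d K} \<le> card ((\<lambda>x. R``{x}) ` ends g)" by (intro card_mono) (use fe in auto)
    also have "\<dots> \<le> card (ends g)" by (rule card_image_le[OF fe])
    finally show ?thesis using ce by auto
  qed
  have "3 * card Q = (\<Sum>K\<in>Q. 3)" by simp
  also have "\<dots> \<le> (\<Sum>K\<in>Q. card (d K))" by (rule sum_mono) (use d3 in auto)
  also have "\<dots> = (\<Sum>K\<in>Q. \<Sum>g\<in>S. if g \<in> d K then 1 else 0)"
  proof (rule sum.cong[OF refl])
    fix K assume K: "K \<in> Q"
    have "(\<Sum>g\<in>S. if g \<in> d K then 1 else 0) = card {g\<in>S. g \<in> d K}"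
      using finS by (simp add: sum.inter_filter[symmetric])
    also have "{g\<in>S. g \<in> d K} = d K" using dS[OF K] by blast
    finally show "card (d K) = (\<Sum>g\<in>S. if g \<in> d K then 1 else 0)" by simp
  qed
  also have "\<dots> = (\<Sum>g\<in>S. \<Sum>K\<in>Q. if g \<in> d K then 1 else 0)" by (rule sum.swap)
  also have "\<dots> = (\<Sum>g\<in>S. card {K\<in>Q. g \<in> d K})"
    using finQ by (simp add: sum.inter_filter[symmetric])
  also have "\<dots> \<le> (\<Sum>g\<in>S. 2)" by (rule sum_mono) (use cnt in auto)
  also have "\<dots> = 2 * card S" by simp
  finally show ?thesis using cQ by simp
qed




lemma tab:
  fixes s c r n :: int
  assumes "c \<ge> 1" "s \<ge> 0" "s = 0 \<longrightarrow> c = 1" "s = 1 \<longrightarrow> c = 1" "s = 2 \<longrightarrow> c = 1"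
    "c \<ge> 2 \<longrightarrow> 3 * c \<le> 2 * s" "n = r - 1 - s + c"
  shows "n \<le> r \<and> (n = r \<longleftrightarrow> s = 0) \<and> (n = r - 1 \<longleftrightarrow> s = 1) \<and> (n = r - 2 \<longleftrightarrow> s = 2 \<or> (s = 3 \<and> c \<ge> 2))"
  using assms by arith

lemma coeff_fpoly:
  assumes finE: "finite E"
  shows "coeff (fpoly V E ends) k = (\<Sum>S\<in>Pow E. if nul V (E - S) ends = k then (-1::real) ^ card S else 0)"
proof -
  have "coeff (fpoly V E ends) k = (\<Sum>A\<in>Pow E. if nul V A ends = k then (-1::real) ^ (card E - card A) else 0)"
    unfolding fpoly_def coeff_sum coeff_monom by simp
  also have "\<dots> = (\<Sum>S\<in>(\<lambda>S. E - S) ` Pow E. if nul V S ends = k then (-1::real) ^ (card E - card S) else 0)"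
  proof -
    have "(\<lambda>S. E - S) ` Pow E = Pow E" by (auto simp: image_iff)
    then show ?thesis by simp
  qed
  also have "\<dots> = (\<Sum>S\<in>Pow E. if nul V (E - S) ends = k then (-1::real) ^ (card E - card (E - S)) else 0)"
    by (rule sum.reindex[unfolded o_def]) (rule inj_onI, blast)
  also have "\<dots> = (\<Sum>S\<in>Pow E. if nul V (E - S) ends = k then (-1::real) ^ card S else 0)"
  proof (rule sum.cong[OF refl])
    fix S assume "S \<in> Pow E"
    then have SE: "S \<subseteq> E" by blast
    have fS: "finite S" using SE finE finite_subset by auto
    have "card (E - S) = card E - card S" using card_Diff_subset[OF fS SE] .
    moreover have "card S \<le> card E" using card_mono[OF finE SE] .
    ultimately have "card E - card (E - S) = card S" by simp
    then show "(if nul V (E - S) ends = k then (-1::real) ^ (card E - card (E - S)) else 0) =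
      (if nul V (E - S) ends = k then (-1::real) ^ card S else 0)" by simp
  qed
  finally show ?thesis .
qed

lemma sum_if_card:
  assumes "finite X"
  shows "(\<Sum>S\<in>X. if P S then (c::real) else 0) = c * real (card {S\<in>X. P S})"
proof -
  have "(\<Sum>S\<in>X. if P S then c else 0) = (\<Sum>S\<in>{S\<in>X. P S}. c)"
    using assms by (simp add: sum.inter_filter[symmetric])
  then show ?thesis by simp
qed

lemma poly_fpoly_1:
  assumes finE: "finite E" and eE: "e \<in> E"
  shows "poly (fpoly V E ends) 1 = 0"
proof -
  have "poly (fpoly V E ends) 1 = (\<Sum>A\<in>Pow E. (-1::real) ^ (card E - card A))"
    unfolding fpoly_def poly_sum poly_monom by simp
  also have "\<dots> = (\<Sum>A\<in>Pow (E - {e}). (-1::real) ^ (card E - card A) + (-1) ^ (card E - card (insert e A)))"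
    by (rule sum_Pow_split[OF finE eE])
  also have "\<dots> = (\<Sum>A\<in>Pow (E - {e}). 0)"
  proof (rule sum.cong[OF refl])
    fix A assume A: "A \<in> Pow (E - {e})"
    then have As: "A \<subseteq> E - {e}" by blast
    note C = card_lt_of_sub[OF As eE finE]
    show "(-1::real) ^ (card E - card A) + (-1) ^ (card E - card (insert e A)) = 0"
      unfolding C(4) sign_Suc[OF C(1)] sign_ins[OF C(1)] by simp
  qed
  finally show ?thesis by simp
qed

lemma poly_fpoly_0: "poly (fpoly V E ends) 0 \<in> \<int>"
  unfolding fpoly_def poly_sum poly_monom by (intro Ints_sum) auto

theorem lemma5p2:
  fixes V :: "'v set" and E :: "'e set" and ends :: "'e \<Rightarrow> 'v set" and p :: "real poly"
  assumes "graph V E ends"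
    and "connected_graph V E ends"
    and "\<forall>e\<in>E. \<not> is_bridge V E ends e"
    and "k_edge_cuts 2 V E ends = {}"
    and "flow_poly V E ends p"
    and "\<forall>z::complex. poly (map_poly complex_of_real p) z = 0 \<longrightarrow> z \<in> \<real>"
  shows "let \<gamma> = card (k_edge_cuts 3 V E ends);
             r = int (card E) - int (card V) + 1
         in real \<gamma> \<ge> real_of_int ((int (card E) - r) * (int (card E) - 1)) / real_of_int (2 * (r - 1))
            \<and> (\<not> (r - 1) dvd (int (card E) - 1) \<longrightarrow>
                real \<gamma> > real_of_int ((int (card E) - r) * (int (card E) - 1)) / real_of_int (2 * (r - 1)))"
proof -
  note g = assms(1) and conn = assms(2) and nb = assms(3) and n2 = assms(4)
  have finV: "finite V" and finE: "finite E" using g unfolding graph_def by auto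
  have Vne: "V \<noteq> {}" using conn unfolding connected_graph_def by simp
  have pf: "p = fpoly V E ends" by (rule flow_poly_fpoly[OF assms(5)])
  have c1: "ncomp V E ends = 1" by (rule ncomp_conn[OF finV conn])
  define m where "m = card E"
  define nv where "nv = card V"
  define \<gamma> where "\<gamma> = card (k_edge_cuts 3 V E ends)"
  have ok: "\<forall>e\<in>A. ends e \<subseteq> V \<and> card (ends e) \<in> {1, 2}" if "A \<subseteq> E" for A using graph_sub[OF g that] .
  have fbS: "nv \<le> (m - card S) + ncomp V (E - S) ends" if S: "S \<subseteq> E" for S
  proof -
    have fS: "finite S" using S finE finite_subset by auto
    have "card V \<le> card (E - S) + ncomp V (E - S) ends"
      by (rule forest_bound[OF finV _ ok]) (use finE in auto)
    moreover have "card (E - S) = card E - card S" using card_Diff_subset[OF fS S] .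
    ultimately show ?thesis unfolding m_def nv_def by simp
  qed
  have small: "ncomp V (E - S) ends = 1" if S: "S \<subseteq> E" and cs: "card S = 1 \<or> card S = 2" for S
  proof -
    have "\<not> is_edge_cut V E ends S"
    proof
      assume cut: "is_edge_cut V E ends S"
      show False using cs
      proof
        assume "card S = 1"
        then obtain e where "S = {e}" by (auto simp: card_1_singleton_iff)
        then show False using cut nb S unfolding is_bridge_def by auto
      next
        assume "card S = 2"
        then have "S \<in> k_edge_cuts 2 V E ends" using cut unfolding k_edge_cuts_def by simp
        then show False using n2 by simp
      qed
    qed
    then have "ncomp V (E - S) ends \<le> 1" using S c1 unfolding is_edge_cut_def by simp
    moreover have "ncomp V (E - S) ends \<ge> 1" by (rule ncomp_pos[OF finV Vne])
    ultimately show ?thesis by simp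
  qed
  show ?thesis
  proof (cases "E = {}")
    case True
    have "\<forall>u\<in>V. \<forall>v\<in>V. u = v"
    proof (intro ballI)
      fix u v assume "u \<in> V" "v \<in> V"
      then have "(u, v) \<in> (adj E ends)\<^sup>*" using conn unfolding connected_graph_def by blast
      moreover have "adj E ends = {}" using True unfolding adj_def by simp
      ultimately show "u = v" by simp
    qed
    then obtain x where "V = {x}" using Vne by blast
    then have nv1: "card V = 1" by simp
    have "k_edge_cuts 3 V E ends = {}" using True unfolding k_edge_cuts_def is_edge_cut_def by auto
    then show ?thesis using True nv1 by (simp add: Let_def)
  next
    case False
    then obtain e where eE: "e \<in> E" by blast
    have "nv \<le> (m - 1) + 1" using fbS[of "{e}"] small[of "{e}"] eE by simp
    moreover have "card E > 0" using eE finE card_gt_0_iff by blast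
    ultimately have mnv: "nv \<le> m" and m1: "m \<ge> 1" unfolding m_def by simp_all
    have "card V > 0" using Vne finV card_gt_0_iff by blast
    then have nv1: "nv \<ge> 1" unfolding nv_def by simp
    show ?thesis
    proof (cases "m = 1")
      case True
      then have nvv: "nv = 1" using mnv nv1 by simp
      have "k_edge_cuts 3 V E ends = {}"
      proof (rule ccontr)
        assume "k_edge_cuts 3 V E ends \<noteq> {}"
        then obtain S where "card S = 3" "S \<subseteq> E" unfolding k_edge_cuts_def is_edge_cut_def by auto
        then have "3 \<le> m" using card_mono[OF finE, of S] unfolding m_def by simp
        then show False using True by simp
      qed
      then show ?thesis using True nvv unfolding m_def nv_def by (simp add: Let_def)
    next
      case False
      then have m2: "m \<ge> 2" using m1 by simp
      obtain S2 where S2: "S2 \<subseteq> E" "card S2 = 2"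
        by (rule obtain_subset_with_card_n[of 2 E]) (use m2 in \<open>simp_all add: m_def\<close>)
      have "nv \<le> (m - 2) + 1" using fbS[OF S2(1)] small[OF S2(1)] S2(2) by simp
      then have mnv2: "nv + 1 \<le> m" using m2 by simp
      define rn where "rn = m + 1 - nv"
      have r2: "rn \<ge> 2" unfolding rn_def using mnv2 by simp
      have rint: "int m - int nv + 1 = int rn" unfolding rn_def using mnv by simp
      have tabS: "nul V (E - S) ends \<le> rn \<and> (nul V (E - S) ends = rn \<longleftrightarrow> card S = 0)
          \<and> (nul V (E - S) ends = rn - 1 \<longleftrightarrow> card S = 1)
          \<and> (nul V (E - S) ends = rn - 2 \<longleftrightarrow> card S = 2 \<or> (card S = 3 \<and> ncomp V (E - S) ends \<ge> 2))"
        if S: "S \<subseteq> E" for S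
      proof -
        let ?c = "ncomp V (E - S) ends"
        let ?s = "card S"
        have fS: "finite S" using S finE finite_subset by auto
        have sm: "?s \<le> m" using card_mono[OF finE S] unfolding m_def .
        have cE: "card (E - S) = m - ?s" using card_Diff_subset[OF fS S] unfolding m_def .
        have fb: "nv \<le> (m - ?s) + ?c" by (rule fbS[OF S])
        have nn: "int (nul V (E - S) ends) = int rn - 1 - int ?s + int ?c"
          unfolding nul_def cE using fb sm mnv unfolding nv_def[symmetric] rn_def by simp
        have a1: "int ?c \<ge> 1" using ncomp_pos[OF finV Vne, of "E - S" ends] by simp
        have a3: "int ?s = 0 \<longrightarrow> int ?c = 1" using c1 fS by auto
        have a4: "int ?s = 1 \<longrightarrow> int ?c = 1" using small[OF S] by auto
        have a5: "int ?s = 2 \<longrightarrow> int ?c = 1" using small[OF S] by auto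
        have a6: "int ?c \<ge> 2 \<longrightarrow> 3 * int ?c \<le> 2 * int ?s"
          using cut_bound[OF g conn nb n2 S] by linarith
        note T = tab[OF a1 of_nat_0_le_iff a3 a4 a5 a6 nn]
        define n where "n = nul V (E - S) ends"
        have T1: "int n \<le> int rn" and T2: "int n = int rn \<longleftrightarrow> int ?s = 0"
          and T3: "int n = int rn - 1 \<longleftrightarrow> int ?s = 1"
          and T4: "int n = int rn - 2 \<longleftrightarrow> int ?s = 2 \<or> (int ?s = 3 \<and> int ?c \<ge> 2)"
          using T unfolding n_def by blast+
        have e1: "int (rn - 1) = int rn - 1" and e2: "int (rn - 2) = int rn - 2" using r2 by simp_all
        have "n \<le> rn" using T1 by simp
        moreover have "n = rn \<longleftrightarrow> ?s = 0" using T2 by simp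
        moreover have "n = rn - 1 \<longleftrightarrow> ?s = 1"
        proof -
          have "n = rn - 1 \<longleftrightarrow> int n = int (rn - 1)" by (simp only: of_nat_eq_iff)
          then show ?thesis using T3 e1 by simp
        qed
        moreover have "n = rn - 2 \<longleftrightarrow> ?s = 2 \<or> (?s = 3 \<and> ?c \<ge> 2)"
        proof -
          have "n = rn - 2 \<longleftrightarrow> int n = int (rn - 2)" by (simp only: of_nat_eq_iff)
          then show ?thesis using T4 e2 by simp
        qed
        ultimately show ?thesis unfolding n_def by blast
      qed
      have cf: "coeff p k = (\<Sum>S\<in>Pow E. if nul V (E - S) ends = k then (-1::real) ^ card S else 0)" for k
        unfolding pf by (rule coeff_fpoly[OF finE])
      have hi: "coeff p k = 0" if k: "k > rn" for k
        unfolding cf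
      proof (rule sum.neutral, rule ballI)
        fix S assume "S \<in> Pow E"
        then have "nul V (E - S) ends \<le> rn" using tabS by blast
        then show "(if nul V (E - S) ends = k then (-1::real) ^ card S else 0) = 0" using k by simp
      qed
      have top: "coeff p rn = 1"
      proof -
        have "coeff p rn = (\<Sum>S\<in>Pow E. if S = {} then 1 else 0)"
          unfolding cf
        proof (rule sum.cong[OF refl])
          fix S assume S: "S \<in> Pow E"
          then have fS: "finite S" using finE finite_subset by auto
          have "nul V (E - S) ends = rn \<longleftrightarrow> S = {}" using tabS[of S] S fS by auto
          then show "(if nul V (E - S) ends = rn then (-1::real) ^ card S else 0) = (if S = {} then 1 else 0)"
            by simp
        qed
        also have "\<dots> = 1" using finE by simp
        finally show ?thesis .
      qed
      have deg: "degree p = rn"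
      proof (rule order.antisym)
        show "degree p \<le> rn" by (rule degree_le) (use hi in auto)
        show "rn \<le> degree p" by (rule le_degree) (use top in simp)
      qed
      have co1: "coeff p (rn - 1) = - real m"
      proof -
        have "coeff p (rn - 1) = (\<Sum>S\<in>Pow E. if card S = 1 then (-1::real) else 0)"
          unfolding cf
        proof (rule sum.cong[OF refl])
          fix S assume S: "S \<in> Pow E"
          have "nul V (E - S) ends = rn - 1 \<longleftrightarrow> card S = 1" using tabS[of S] S by auto
          then show "(if nul V (E - S) ends = rn - 1 then (-1::real) ^ card S else 0) = (if card S = 1 then -1 else 0)"
            by simp
        qed
        also have "\<dots> = - real (card {S\<in>Pow E. card S = 1})" using finE by (simp add: sum_if_card)
        also have "{S\<in>Pow E. card S = 1} = {B. B \<subseteq> E \<and> card B = 1}" by auto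
        also have "card \<dots> = m choose 1" using n_subsets[OF finE, of 1] unfolding m_def .
        finally show ?thesis by simp
      qed
      have co2: "coeff p (rn - 2) = real (m choose 2) - real \<gamma>"
      proof -
        have "coeff p (rn - 2) = (\<Sum>S\<in>Pow E. (if card S = 2 then (1::real) else 0) +
              (if card S = 3 \<and> ncomp V (E - S) ends \<ge> 2 then -1 else 0))"
          unfolding cf
        proof (rule sum.cong[OF refl])
          fix S assume S: "S \<in> Pow E"
          have "nul V (E - S) ends = rn - 2 \<longleftrightarrow> card S = 2 \<or> (card S = 3 \<and> ncomp V (E - S) ends \<ge> 2)"
            using tabS[of S] S by auto
          then show "(if nul V (E - S) ends = rn - 2 then (-1::real) ^ card S else 0) =
            (if card S = 2 then (1::real) else 0) + (if card S = 3 \<and> ncomp V (E - S) ends \<ge> 2 then -1 else 0)"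
            by auto
        qed
        also have "\<dots> = real (card {S\<in>Pow E. card S = 2}) - real (card {S\<in>Pow E. card S = 3 \<and> ncomp V (E - S) ends \<ge> 2})"
          using finE by (simp add: sum.distrib sum_if_card)
        also have "{S\<in>Pow E. card S = 2} = {B. B \<subseteq> E \<and> card B = 2}" by auto
        also have "card \<dots> = m choose 2" using n_subsets[OF finE, of 2] unfolding m_def .
        also have "{S\<in>Pow E. card S = 3 \<and> ncomp V (E - S) ends \<ge> 2} = k_edge_cuts 3 V E ends"
          unfolding k_edge_cuts_def is_edge_cut_def c1 by auto
        finally show ?thesis unfolding \<gamma>_def .
      qed
      have p1: "poly p 1 = 0" unfolding pf by (rule poly_fpoly_1[OF finE eE])
      have p0: "poly p 0 \<in> \<int>" unfolding pf by (rule poly_fpoly_0)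
      have N: "(real m - 1) * (real m - real rn) \<le> 2 * real \<gamma> * (real rn - 1) \<and>
        ((real m - 1) * (real m - real rn) = 2 * real \<gamma> * (real rn - 1) \<longrightarrow> (int rn - 1) dvd (int m - 1))"
        by (rule newton_main[OF deg top r2 co1 co2 p1 p0 assms(6)])
      have rr: "int (card E) - int (card V) + 1 = int rn" using rint unfolding m_def nv_def .
      define L where "L = real_of_int ((int m - int rn) * (int m - 1)) / real_of_int (2 * (int rn - 1))"
      have den: "real rn - 1 > 0" using r2 by simp
      have Le: "L = ((real m - 1) * (real m - real rn)) / (2 * (real rn - 1))" unfolding L_def by (simp add: mult.commute)
      have g1: "L \<le> real \<gamma>" unfolding Le using N den by (simp add: pos_divide_le_eq mult_ac)
      have g2: "L < real \<gamma>" if nd: "\<not> (int rn - 1) dvd (int m - 1)"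
      proof -
        have "(real m - 1) * (real m - real rn) < 2 * real \<gamma> * (real rn - 1)" using N nd by auto
        then show ?thesis unfolding Le using den by (simp add: pos_divide_less_eq mult_ac)
      qed
      show ?thesis unfolding Let_def rr using g1 g2 unfolding L_def m_def \<gamma>_def by simp
    qed
  qed
qed


end
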